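(* Let $N$ be the Iwasawa N-group of a real simple Lie group of real rank one, i.e. $N$ is one of: the abelian Lie group $\mathbb{R}^n$, a $(2n+1)$-dimensional Heisenberg group, a $(4n+3)$-dimensional quaternionic Heisenberg group, or the $15$-dimensional octonionic Heisenberg group. Then $N$ satisfies the partial automatic continuity. More precisely, for every abstract (not necessarily continuous) group automorphism $F$ of $N$ there exist a central automorphism $\mu$ of $N$ and a Lie group automorphism $\overline{F}$ of $N$ such that $F=\mu\circ\overline{F}$.
   Context: For a real simple Lie group $G$ with Iwasawa decomposition $G=KAN$, the simply connected nilpotent group $N$ is its Iwasawa N-group. A central automorphism of $N$ is an abstract group automorphism $F$ with $x^{-1}F(x)$ in the center of $N$ for all $x\in N$; a Lie group automorphism is a continuous (hence smooth) group automorphism. Field automorphisms of a simply connected nilpotent Lie group $N$ with Lie algebra $\mathcal{N}$: if $\mathcal{N}=\mathcal{N}_1\oplus\cdots\oplus\mathcal{N}_k$ is a direct sum of ideals, for each $\mathcal{N}_i$ that is the realification of a complex Lie algebra choose a $\mathbb{C}$-basis $e_1,\dots,e_m$ and a field automorphism $\varphi$ of $\mathbb{C}$ fixing the structure constants and let $\sigma_i(\sum x_le_l)=\sum\varphi(x_l)e_l$, otherwise $\sigma_i=\mathrm{id}$; then $\exp\circ(\sigma_1\times\cdots\times\sigma_k)\circ\exp^{-1}$ is a field automorphism. $N$ satisfies the partial automatic continuity if every abstract group automorphism has the form $\mu\circ\overline{F}\circ\Phi$ with $\mu$ central, $\overline{F}$ a Lie group automorphism, $\Phi$ a field automorphism.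 *)

theory Defs
  imports "HOL-Analysis.Analysis" "HOL-Algebra.Group"
begin

definition group_center :: "('a, 'b) monoid_scheme \<Rightarrow> 'a set" where
  "group_center G = {z \<in> carrier G. \<forall>x\<in>carrier G. z \<otimes>\<^bsub>G\<^esub> x = x \<otimes>\<^bsub>G\<^esub> z}"

definition central_aut :: "('a, 'b) monoid_scheme \<Rightarrow> ('a \<Rightarrow> 'a) \<Rightarrow> bool" where
  "central_aut G F \<longleftrightarrow> F \<in> iso G G \<and>
     (\<forall>x\<in>carrier G. inv\<^bsub>G\<^esub> x \<otimes>\<^bsub>G\<^esub> F x \<in> group_center G)"

definition lie_aut :: "('a::topological_space, 'b) monoid_scheme \<Rightarrow> ('a \<Rightarrow> 'a) \<Rightarrow> bool" where
  "lie_aut G F \<longleftrightarrow> F \<in> iso G G \<and> continuous_on (carrier G) F"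

definition aut_central_lie_decomp :: "('a::topological_space, 'b) monoid_scheme \<Rightarrow> bool" where
  "aut_central_lie_decomp G \<longleftrightarrow>
     (\<forall>F\<in>iso G G. \<exists>\<mu> Fb. central_aut G \<mu> \<and> lie_aut G Fb \<and>
        (\<forall>x\<in>carrier G. F x = \<mu> (Fb x)))"

definition vec_group :: "(real^'n) monoid" where
  "vec_group = \<lparr>carrier = UNIV, mult = (+), one = 0\<rparr>"

text \<open>Two-step nilpotent group on V x Z in exponential coordinates, given the bracket
  \<omega> : V x V \<rightarrow> Z (skew, bilinear): (v,z)(v',z') = (v+v', z+z'+ 1/2 \<omega>(v,v')).\<close>
definition two_step_group ::
  "('v::real_vector \<Rightarrow> 'v \<Rightarrow> 'z::real_vector) \<Rightarrow> ('v \<times> 'z) monoid" where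
  "two_step_group \<omega> = \<lparr>carrier = UNIV,
     mult = (\<lambda>(v, z) (v', z'). (v + v', z + z' + (1/2) *\<^sub>R \<omega> v v')),
     one = (0, 0)\<rparr>"

definition heis_form :: "((real^'n) \<times> (real^'n)) \<Rightarrow> ((real^'n) \<times> (real^'n)) \<Rightarrow> real" where
  "heis_form = (\<lambda>(x, y) (x', y'). x \<bullet> y' - y \<bullet> x')"

definition heisenberg_group :: "(((real^'n) \<times> (real^'n)) \<times> real) monoid" where
  "heisenberg_group = two_step_group heis_form"

text \<open>Quaternions as real^4 (components 1,2,3,4 = 1,i,j,k).\<close>
definition qmult :: "real^4 \<Rightarrow> real^4 \<Rightarrow> real^4" where
  "qmult p q = (\<chi> l.
     if l = 1 then p$1*q$1 - p$2*q$2 - p$3*q$3 - p$4*q$4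
     else if l = 2 then p$1*q$2 + p$2*q$1 + p$3*q$4 - p$4*q$3
     else if l = 3 then p$1*q$3 - p$2*q$4 + p$3*q$1 + p$4*q$2
     else p$1*q$4 + p$2*q$3 - p$3*q$2 + p$4*q$1)"

definition qconj :: "real^4 \<Rightarrow> real^4" where
  "qconj p = (\<chi> l. if l = 1 then p$1 else - p$l)"

text \<open>Imaginary part of a quaternion, as an element of real^3 ~ Im H.\<close>
definition qim :: "real^4 \<Rightarrow> real^3" where
  "qim p = (\<chi> l. if l = 1 then p$2 else if l = 2 then p$3 else p$4)"

text \<open>Quaternionic Heisenberg group of dimension 4n+3: V = H^n, Z = Im H,
  bracket Im(sum_i conj(v_i) v'_i).\<close>
definition qheis_form :: "real^4^'n \<Rightarrow> real^4^'n \<Rightarrow> real^3" where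
  "qheis_form v w = qim (\<Sum>i\<in>UNIV. qmult (qconj (v$i)) (w$i))"

definition quaternionic_heisenberg_group :: "((real^4^'n) \<times> (real^3)) monoid" where
  "quaternionic_heisenberg_group = two_step_group qheis_form"

text \<open>Octonions as H x H via Cayley--Dickson: (a,b)(c,d) = (ac - conj(d) b, d a + b conj(c)).\<close>
definition omult :: "((real^4) \<times> (real^4)) \<Rightarrow> ((real^4) \<times> (real^4)) \<Rightarrow> ((real^4) \<times> (real^4))" where
  "omult = (\<lambda>(a, b) (c, d). (qmult a c - qmult (qconj d) b, qmult d a + qmult b (qconj c)))"

definition oconj :: "((real^4) \<times> (real^4)) \<Rightarrow> ((real^4) \<times> (real^4))" where
  "oconj = (\<lambda>(a, b). (qconj a, - b))"

text \<open>Imaginary part of an octonion, as an element of real^3 x real^4 ~ Im O (dimension 7).\<close>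
definition oim :: "((real^4) \<times> (real^4)) \<Rightarrow> ((real^3) \<times> (real^4))" where
  "oim = (\<lambda>(a, b). (qim a, b))"

text \<open>15-dimensional octonionic Heisenberg group: V = O, Z = Im O, bracket Im(conj(v) v').\<close>
definition oheis_form :: "((real^4) \<times> (real^4)) \<Rightarrow> ((real^4) \<times> (real^4)) \<Rightarrow> ((real^3) \<times> (real^4))" where
  "oheis_form v w = oim (omult (oconj v) w)"

definition octonionic_heisenberg_group :: "(((real^4) \<times> (real^4)) \<times> ((real^3) \<times> (real^4))) monoid" where
  "octonionic_heisenberg_group = two_step_group oheis_form"

end

theory Submission
  imports Defs
begin


lemma ring_endo_real_id:
  fixes c :: "real \<Rightarrow> real"
  assumes add: "\<And>a b. c (a + b) = c a + c b"
    and mul: "\<And>a b. c (a * b) = c a * c b"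
    and one: "c 1 = 1"
  shows "c x = x"
proof -
  have c0: "c 0 = 0" using add[of 0 0] by simp
  have cneg: "c (- a) = - c a" for a using add[of a "-a"] c0 by simp
  have cnat: "c (of_nat n) = of_nat n" for n
    by (induction n) (simp_all add: c0 add one)
  have cint: "c (of_int k) = of_int k" for k
  proof (cases "k \<ge> 0")
    case True then show ?thesis using cnat[of "nat k"] by simp
  next
    case False then show ?thesis using cnat[of "nat (-k)"] cneg[of "of_nat (nat (-k))"] by simp
  qed
  have crat: "c r = r" if rq: "r \<in> \<rat>" for r
  proof -
    obtain a b where ab: "r = of_int a / of_int b" "b > 0" by (rule Rats_cases'[OF rq]) auto
    have "of_int a = r * of_int b" using ab by simp
    then have "c (of_int a) = c r * c (of_int b)" using mul by metis
    then have e1: "of_int a = c r * of_int b" using cint by simp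
    have e2: "r * of_int b = of_int a" using ab by simp
    have "c r * of_int b = r * of_int b" using e1 e2 by metis
    moreover have "real_of_int b \<noteq> 0" using ab(2) by simp
    ultimately show ?thesis by simp
  qed
  have cpos: "c a \<ge> 0" if "a \<ge> 0" for a
  proof -
    have "a = sqrt a * sqrt a" using that by simp
    then have "c a = c (sqrt a) * c (sqrt a)" using mul by metis
    then show ?thesis by simp
  qed
  have cmono: "c a \<le> c b" if "a \<le> b" for a b
  proof -
    have "c (b - a) \<ge> 0" using cpos that by simp
    moreover have "c b = c (b - a) + c a" using add[of "b-a" a] by simp
    ultimately show ?thesis by simp
  qed
  show ?thesis
  proof (rule ccontr)
    assume "c x \<noteq> x"
    then consider "c x < x" | "c x > x" by linarith
    then show False
    proof cases
      case 1
      then obtain r where r: "r \<in> \<rat>" "c x < r" "r < x" using Rats_dense_in_real by blast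
      then have "c r \<le> c x" using cmono by simp
      then show False using crat[OF r(1)] r by simp
    next
      case 2
      then obtain r where r: "r \<in> \<rat>" "x < r" "r < c x" using Rats_dense_in_real by blast
      then have "c x \<le> c r" using cmono by simp
      then show False using crat[OF r(1)] r by simp
    qed
  qed
qed


locale tsg =
  fixes \<omega> :: "'v::euclidean_space \<Rightarrow> 'v \<Rightarrow> 'z::euclidean_space"
  assumes wadd: "\<And>a b c. \<omega> (a + b) c = \<omega> a c + \<omega> b c"
    and wscal: "\<And>r a c. \<omega> (r *\<^sub>R a) c = r *\<^sub>R \<omega> a c"
    and wskew: "\<And>a b. \<omega> a b = - \<omega> b a"
begin

abbreviation "G \<equiv> two_step_group \<omega>"

lemma carr[simp]: "carrier G = UNIV" by (simp add: two_step_group_def)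
lemma mlt[simp]: "(v, z) \<otimes>\<^bsub>G\<^esub> (v', z') = (v + v', z + z' + (1/2) *\<^sub>R \<omega> v v')"
  by (simp add: two_step_group_def)
lemma one[simp]: "\<one>\<^bsub>G\<^esub> = (0, 0)" by (simp add: two_step_group_def)

lemma wadd2: "\<omega> c (a + b) = \<omega> c a + \<omega> c b"
  using wadd[of a b c] wskew by (metis minus_add_distrib)
lemma wscal2: "\<omega> c (r *\<^sub>R a) = r *\<^sub>R \<omega> c a"
  using wscal[of r a c] wskew by (metis scaleR_minus_right)
lemma w0[simp]: "\<omega> 0 a = 0" using wscal[of 0 0 a] by simp
lemma w02[simp]: "\<omega> a 0 = 0" using wscal2[of a 0 0] by simp
lemma wself[simp]: "\<omega> a a = 0"
proof -
  have "(2::real) *\<^sub>R \<omega> a a = 0" using wskew[of a a] by (simp add: scaleR_2 eq_neg_iff_add_eq_0)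
  then show ?thesis by simp
qed
lemma wneg[simp]: "\<omega> (- a) b = - \<omega> a b" using wscal[of "-1" a b] by simp
lemma wneg2[simp]: "\<omega> a (- b) = - \<omega> a b" using wscal2[of a "-1" b] by simp
lemma wdiff: "\<omega> (a - b) c = \<omega> a c - \<omega> b c" using wadd[of a "-b" c] by simp
lemma wdiff2: "\<omega> c (a - b) = \<omega> c a - \<omega> c b" using wadd2[of c a "-b"] by simp

lemma grp: "group G"
proof (rule groupI)
  fix x y z :: "'v \<times> 'z"
  show "(x \<otimes>\<^bsub>G\<^esub> y) \<otimes>\<^bsub>G\<^esub> z = x \<otimes>\<^bsub>G\<^esub> (y \<otimes>\<^bsub>G\<^esub> z)"
    by (cases x, cases y, cases z) (simp add: wadd wadd2 algebra_simps)
next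
  fix x :: "'v \<times> 'z"
  show "\<one>\<^bsub>G\<^esub> \<otimes>\<^bsub>G\<^esub> x = x" by (cases x) simp
  show "\<exists>y\<in>carrier G. y \<otimes>\<^bsub>G\<^esub> x = \<one>\<^bsub>G\<^esub>"
    by (cases x) (rule bexI[where x="(- fst x, - snd x)"], auto)
qed auto

lemma inv_eq[simp]: "inv\<^bsub>G\<^esub> (v, z) = (- v, - z)"
  by (rule group.inv_equality[OF grp]) auto

lemma center_0: "(0, z) \<in> group_center G"
  by (auto simp: group_center_def)


lemma decomp:
  assumes N: "\<And>a. (\<forall>b. \<omega> a b = 0) \<Longrightarrow> a = 0"
    and K: "\<And>x u. x \<noteq> 0 \<Longrightarrow> (\<forall>y. \<omega> x y = 0 \<longrightarrow> \<omega> u y = 0) \<Longrightarrow> \<exists>c. u = c *\<^sub>R x"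
    and S: "\<And>z. \<exists>a b. \<omega> a b = z"
  shows "aut_central_lie_decomp G"
  unfolding aut_central_lie_decomp_def
proof
  fix F assume FI: "F \<in> iso G G"
  have hom: "\<And>x y. F (x \<otimes>\<^bsub>G\<^esub> y) = F x \<otimes>\<^bsub>G\<^esub> F y" using FI by (auto simp: iso_def hom_def)
  have bij: "bij F" using FI by (auto simp: iso_def)
  then have Finj: "F x = F y \<Longrightarrow> x = y" for x y by (meson bij_def injD)
  have Fsurj: "\<exists>x. F x = y" for y using bij by (metis bij_pointE)
  define f where "f v = fst (F (v, 0))" for v
  define h where "h v = snd (F (v, 0))" for v
  define g where "g z = snd (F (0, z))" for z
  have cen: "fst (F (0, z)) = 0" for z
  proof -
    obtain a b where ab: "F (0, z) = (a, b)" by force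
    have "\<omega> a c = 0" for c
    proof -
      obtain y where y: "F y = (c, 0)" using Fsurj by blast
      have "(0, z) \<otimes>\<^bsub>G\<^esub> y = y \<otimes>\<^bsub>G\<^esub> (0, z)" by (cases y) (simp add: algebra_simps)
      then have "F (0, z) \<otimes>\<^bsub>G\<^esub> F y = F y \<otimes>\<^bsub>G\<^esub> F (0, z)" using hom by metis
      then have "(1/2::real) *\<^sub>R \<omega> a c = (1/2::real) *\<^sub>R \<omega> c a" using ab y by (simp add: algebra_simps)
      then have "\<omega> a c = \<omega> c a" by simp
      then have "\<omega> a c = - \<omega> a c" using wskew by metis
      then have "(2::real) *\<^sub>R \<omega> a c = 0" by (simp add: scaleR_2 eq_neg_iff_add_eq_0)
      then show ?thesis by simp
    qed
    then have "a = 0" using N by blast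
    then show ?thesis using ab by simp
  qed
  have F0z: "F (0, z) = (0, g z)" for z using cen[of z] unfolding g_def by (metis prod.collapse)
  have Fv0: "F (v, 0) = (f v, h v)" for v unfolding f_def h_def by simp
  have Fform: "F (v, z) = (f v, h v + g z)" for v z
  proof -
    have "(v, z) = (v, 0) \<otimes>\<^bsub>G\<^esub> (0, z)" by simp
    then have "F (v, z) = F (v, 0) \<otimes>\<^bsub>G\<^esub> F (0, z)" using hom by metis
    then show ?thesis using F0z Fv0 by simp
  qed
  have E: "f (v + v') = f v + f v' \<and> h (v + v') + g (z + z' + (1/2) *\<^sub>R \<omega> v v') = h v + g z + (h v' + g z') + (1/2) *\<^sub>R \<omega> (f v) (f v')" for v v' z z'
  proof -
    have "F ((v, z) \<otimes>\<^bsub>G\<^esub> (v', z')) = F (v, z) \<otimes>\<^bsub>G\<^esub> F (v', z')" using hom by metis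
    then show ?thesis by (simp add: Fform)
  qed
  have fadd: "f (a + b) = f a + f b" for a b using E by blast
  have f0: "f 0 = 0" using fadd[of 0 0] by simp
  have hg0: "h 0 = g 0" unfolding h_def g_def by simp
  have g0: "g 0 = 0" and h0: "h 0 = 0"
  proof -
    have "h 0 + g 0 = h 0 + g 0 + (h 0 + g 0)" using E[of 0 0 0 0] f0 by simp
    then have "h 0 + g 0 = 0" by simp
    then have "(2::real) *\<^sub>R g 0 = 0" using hg0 by (simp add: scaleR_2)
    then show "g 0 = 0" by simp
    then show "h 0 = 0" using hg0 by simp
  qed
  have gadd: "g (a + b) = g a + g b" for a b using E[of 0 0 a b] h0 f0 by simp
  have gneg: "g (- a) = - g a" for a
  proof -
    have "g a + g (-a) = 0" using gadd[of a "-a"] g0 by simp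
    then show ?thesis by (metis add.commute eq_neg_iff_add_eq_0)
  qed
  have ghalf: "g ((1/2::real) *\<^sub>R a) = (1/2::real) *\<^sub>R g a" for a
  proof -
    have hh: "(1/2::real) *\<^sub>R a + (1/2::real) *\<^sub>R a = a" by (simp flip: scaleR_add_left)
    have "g a = g ((1/2::real) *\<^sub>R a) + g ((1/2::real) *\<^sub>R a)" using gadd hh by metis
    then have "g a = (2::real) *\<^sub>R g ((1/2::real) *\<^sub>R a)" by (simp add: scaleR_2)
    then show ?thesis by simp
  qed
  have R: "g (\<omega> v w) = \<omega> (f v) (f w)" for v w
  proof -
    have e1: "h (v + w) + g ((1/2) *\<^sub>R \<omega> v w) = h v + h w + (1/2) *\<^sub>R \<omega> (f v) (f w)"
      using E[of v w 0 0] g0 by simp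
    have e2: "h (w + v) + g ((1/2) *\<^sub>R \<omega> w v) = h w + h v + (1/2) *\<^sub>R \<omega> (f w) (f v)"
      using E[of w v 0 0] g0 by simp
    have "\<omega> w v = - \<omega> v w" "\<omega> (f w) (f v) = - \<omega> (f v) (f w)" using wskew by metis+
    then have e2': "h (v + w) - (1/2) *\<^sub>R g (\<omega> v w) = h v + h w - (1/2) *\<^sub>R \<omega> (f v) (f w)"
      using e2 ghalf gneg by (simp add: add.commute)
    have e1': "h (v + w) + (1/2) *\<^sub>R g (\<omega> v w) = h v + h w + (1/2) *\<^sub>R \<omega> (f v) (f w)"
      using e1 ghalf by simp
    have "(h (v + w) + (1/2) *\<^sub>R g (\<omega> v w)) - (h (v + w) - (1/2) *\<^sub>R g (\<omega> v w))
       = (h v + h w + (1/2) *\<^sub>R \<omega> (f v) (f w)) - (h v + h w - (1/2) *\<^sub>R \<omega> (f v) (f w))"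
      using e1' e2' by simp
    then have "(1/2::real) *\<^sub>R g (\<omega> v w) + (1/2::real) *\<^sub>R g (\<omega> v w) = (1/2::real) *\<^sub>R \<omega> (f v) (f w) + (1/2::real) *\<^sub>R \<omega> (f v) (f w)"
      by (simp add: algebra_simps)
    then show ?thesis by (simp flip: scaleR_add_left)
  qed
  have hadd: "h (a + b) = h a + h b" for a b
    using E[of a b 0 0] g0 ghalf R by simp
  have F00: "F (0, 0) = (0, 0)" using Fform[of 0 0] f0 h0 g0 by simp
  have ginj0: "z = 0" if "g z = 0" for z
  proof -
    have "F (0, z) = F (0, 0)" using F0z[of z] F00 that by simp
    then show ?thesis using Finj by blast
  qed
  have gsub: "g (a - b) = g a - g b" for a b using gadd[of "a - b" b] by simp
  have ginj: "g a = g b \<Longrightarrow> a = b" for a b using ginj0[of "a - b"] gsub by simp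
  have fsub: "f (a - b) = f a - f b" for a b using fadd[of "a - b" b] by simp
  have finj0: "f v = 0 \<Longrightarrow> v = 0" for v
  proof -
    assume "f v = 0"
    then have "\<forall>w. \<omega> v w = 0" using R ginj0 by simp
    then show "v = 0" using N by blast
  qed
  have finj: "f a = f b \<Longrightarrow> a = b" for a b using finj0[of "a - b"] fsub by simp
  have fsurj: "\<exists>v. f v = y" for y
  proof -
    obtain x where "F x = (y, 0)" using Fsurj by blast
    then show ?thesis by (cases x) (auto simp: Fform)
  qed
  have gsurj: "\<exists>z. g z = y" for y
  proof -
    obtain x where x: "F x = (0, y)" using Fsurj by blast
    obtain v z where vz: "x = (v, z)" by force
    have "f v = 0" using x vz by (simp add: Fform)
    then have "v = 0" using finj0 by simp
    then show ?thesis using x vz h0 by (auto simp: Fform)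
  qed
  have fneq: "v \<noteq> 0 \<Longrightarrow> f v \<noteq> 0" for v using finj0 by blast
  obtain e :: 'z where e: "e \<noteq> 0" using nonzero_Basis SOME_Basis by blast
  obtain v0 w0 where vw0: "\<omega> v0 w0 \<noteq> 0" using S[of e] e by blast
  have v0: "v0 \<noteq> 0" using vw0 by auto
  have ex_c: "\<exists>c. f (t *\<^sub>R v) = c *\<^sub>R f v" if "v \<noteq> 0" for t v
  proof (rule K)
    show "f v \<noteq> 0" using fneq that .
    show "\<forall>y. \<omega> (f v) y = 0 \<longrightarrow> \<omega> (f (t *\<^sub>R v)) y = 0"
    proof (intro allI impI)
      fix y assume y: "\<omega> (f v) y = 0"
      obtain w where w: "f w = y" using fsurj by blast
      have "\<omega> v w = 0" using y w R ginj0 by metis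
      then have "\<omega> (t *\<^sub>R v) w = 0" by (simp add: wscal)
      then show "\<omega> (f (t *\<^sub>R v)) y = 0" using R w g0 by metis
    qed
  qed
  define cv where "cv t v = (SOME c. f (t *\<^sub>R v) = c *\<^sub>R f v)" for t v
  have cv: "f (t *\<^sub>R v) = cv t v *\<^sub>R f v" if "v \<noteq> 0" for t v
    unfolding cv_def using someI_ex[OF ex_c[OF that]] .
  have P: "cv t v = cv t w" if "\<omega> v w \<noteq> 0" for t v w
  proof -
    have v: "v \<noteq> 0" and w: "w \<noteq> 0" using that by auto
    have "\<omega> (f (t *\<^sub>R v)) (f w) = g (\<omega> (t *\<^sub>R v) w)" using R by metis
    also have "\<dots> = g (\<omega> v (t *\<^sub>R w))" by (simp add: wscal wscal2)
    also have "\<dots> = \<omega> (f v) (f (t *\<^sub>R w))" using R by metis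
    finally have "cv t v *\<^sub>R \<omega> (f v) (f w) = cv t w *\<^sub>R \<omega> (f v) (f w)"
      using cv[OF v] cv[OF w] by (simp add: wscal wscal2)
    moreover have "\<omega> (f v) (f w) \<noteq> 0" using R that ginj0 by metis
    ultimately show ?thesis by simp
  qed
  have conn: "\<exists>w. \<omega> v0 w \<noteq> 0 \<and> \<omega> v w \<noteq> 0" if "v \<noteq> 0" for v
  proof -
    obtain w1 where w1: "\<omega> v0 w1 \<noteq> 0" using vw0 by blast
    have "\<not> (\<forall>b. \<omega> v b = 0)" using N[of v] that by auto
    then obtain w2 where w2: "\<omega> v w2 \<noteq> 0" by blast
    show ?thesis
    proof (cases "\<omega> v w1 \<noteq> 0")
      case True then show ?thesis using w1 by blast
    next
      case False
      show ?thesis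
      proof (cases "\<omega> v0 w2 \<noteq> 0")
        case True then show ?thesis using w2 by blast
      next
        case False2: False
        have "\<omega> v0 (w1 + w2) \<noteq> 0" using w1 False2 by (simp add: wadd2)
        moreover have "\<omega> v (w1 + w2) \<noteq> 0" using w2 False by (simp add: wadd2)
        ultimately show ?thesis by blast
      qed
    qed
  qed
  define c where "c t = cv t v0" for t
  have fscal: "f (t *\<^sub>R v) = c t *\<^sub>R f v" for t v
  proof (cases "v = 0")
    case True then show ?thesis using f0 by simp
  next
    case False
    obtain w where "\<omega> v0 w \<noteq> 0" "\<omega> v w \<noteq> 0" using conn[OF False] by blast
    then have "cv t v = c t" unfolding c_def using P by metis
    then show ?thesis using cv[OF False] by simp
  qed
  have fv0: "f v0 \<noteq> 0" using fneq v0 .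
  have cadd: "c (a + b) = c a + c b" for a b
  proof -
    have "c (a + b) *\<^sub>R f v0 = (c a + c b) *\<^sub>R f v0"
      using fscal[of "a + b" v0] fscal[of a v0] fscal[of b v0] fadd[of "a *\<^sub>R v0" "b *\<^sub>R v0"]
      by (simp add: scaleR_add_left)
    then show ?thesis using fv0 by simp
  qed
  have cmul: "c (a * b) = c a * c b" for a b
  proof -
    have "c (a * b) *\<^sub>R f v0 = (c a * c b) *\<^sub>R f v0"
      using fscal[of "a * b" v0] fscal[of a "b *\<^sub>R v0"] fscal[of b v0] by simp
    then show ?thesis using fv0 by simp
  qed
  have c1: "c 1 = 1"
  proof -
    have "c 1 *\<^sub>R f v0 = 1 *\<^sub>R f v0" using fscal[of 1 v0] by simp
    then show ?thesis using fv0 by (metis scaleR_cancel_right)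
  qed
  have cid: "c t = t" for t by (rule ring_endo_real_id[OF cadd cmul c1])
  have flin: "linear f"
    by (rule linearI) (simp_all add: fadd fscal cid)
  have gscal: "g (t *\<^sub>R z) = t *\<^sub>R g z" for t z
  proof -
    obtain a b where ab: "\<omega> a b = z" using S by blast
    have "g (t *\<^sub>R z) = g (\<omega> (t *\<^sub>R a) b)" using ab by (simp add: wscal)
    also have "\<dots> = \<omega> (f (t *\<^sub>R a)) (f b)" using R by metis
    also have "\<dots> = t *\<^sub>R \<omega> (f a) (f b)" by (simp add: fscal cid wscal)
    also have "\<dots> = t *\<^sub>R g z" using R ab by metis
    finally show ?thesis .
  qed
  have glin: "linear g"
    by (rule linearI) (simp_all add: gadd gscal)
  define Fb where "Fb = (\<lambda>x. (f (fst x), g (snd x)))"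
  have Fbhom: "Fb (x \<otimes>\<^bsub>G\<^esub> y) = Fb x \<otimes>\<^bsub>G\<^esub> Fb y" for x y
    by (cases x, cases y) (simp add: Fb_def fadd gadd gscal R)
  have Fbbij: "bij Fb"
  proof (rule bijI)
    show "inj Fb" by (rule injI) (auto simp: Fb_def prod_eq_iff intro: finj ginj)
    show "surj Fb"
    proof (rule surjI[where f="\<lambda>y. (SOME v. f v = fst y, SOME z. g z = snd y)"])
      fix y show "Fb (SOME v. f v = fst y, SOME z. g z = snd y) = y"
        unfolding Fb_def using someI_ex[OF fsurj[of "fst y"]] someI_ex[OF gsurj[of "snd y"]]
        by (simp add: prod_eq_iff)
    qed
  qed
  have Fbiso: "Fb \<in> iso G G"
    using Fbhom Fbbij by (auto simp: iso_def hom_def)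
  have Fbcont: "continuous_on (carrier G) Fb"
    unfolding Fb_def
    by (intro continuous_on_Pair linear_continuous_on_compose[OF continuous_on_fst flin]
        linear_continuous_on_compose[OF continuous_on_snd glin] continuous_on_id)
  have bf: "bij f" using finj fsurj by (metis bijI injI surjI)
  define k where "k v = h (inv_into UNIV f v)" for v
  have invadd: "inv_into UNIV f (a + b) = inv_into UNIV f a + inv_into UNIV f b" for a b
    using bf by (metis bij_inv_eq_iff fadd)
  have kadd: "k (a + b) = k a + k b" for a b unfolding k_def by (simp add: invadd hadd)
  define mmu where "mmu = (\<lambda>x. (fst x, snd x + k (fst x)))"
  have muhom: "mmu (x \<otimes>\<^bsub>G\<^esub> y) = mmu x \<otimes>\<^bsub>G\<^esub> mmu y" for x y
    by (cases x, cases y) (simp add: mmu_def kadd algebra_simps)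
  have mubij: "bij mmu"
  proof (rule bijI)
    show "inj mmu" by (rule injI) (auto simp: mmu_def prod_eq_iff)
    show "surj mmu"
    proof (rule surjI[where f="\<lambda>y. (fst y, snd y - k (fst y))"])
      fix y show "mmu (fst y, snd y - k (fst y)) = y" by (simp add: mmu_def)
    qed
  qed
  have muiso: "mmu \<in> iso G G"
    using muhom mubij by (auto simp: iso_def hom_def)
  have mucen: "\<forall>x\<in>carrier G. inv\<^bsub>G\<^esub> x \<otimes>\<^bsub>G\<^esub> mmu x \<in> group_center G"
  proof
    fix x :: "'v \<times> 'z"
    obtain v z where x: "x = (v, z)" by force
    have "inv\<^bsub>G\<^esub> x \<otimes>\<^bsub>G\<^esub> mmu x = (0, k v)" by (simp add: x mmu_def)
    then show "inv\<^bsub>G\<^esub> x \<otimes>\<^bsub>G\<^esub> mmu x \<in> group_center G" using center_0 by simp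
  qed
  have comp: "\<forall>x\<in>carrier G. F x = mmu (Fb x)"
  proof
    fix x :: "'v \<times> 'z"
    obtain v z where x: "x = (v, z)" by force
    have "inv_into UNIV f (f v) = v" using bf by (simp add: bij_is_inj)
    then show "F x = mmu (Fb x)" by (simp add: x mmu_def Fb_def Fform k_def add.commute)
  qed
  show "\<exists>mmu Fb. central_aut G mmu \<and> lie_aut G Fb \<and> (\<forall>x\<in>carrier G. F x = mmu (Fb x))"
    using muiso mucen Fbiso Fbcont comp unfolding central_aut_def lie_aut_def by blast
qed

end



lemma vec_decomp: "aut_central_lie_decomp (vec_group :: (real^'n) monoid)"
  unfolding aut_central_lie_decomp_def
proof
  fix F :: "real^'n \<Rightarrow> real^'n" assume F: "F \<in> iso vec_group vec_group"
  have "central_aut vec_group F"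
    unfolding central_aut_def using F by (auto simp: group_center_def vec_group_def add.commute)
  moreover have "lie_aut vec_group id"
    unfolding lie_aut_def by (simp add: id_iso continuous_on_id)
  ultimately show "\<exists>mmu Fb. central_aut vec_group mmu \<and> lie_aut vec_group Fb \<and> (\<forall>x\<in>carrier vec_group. F x = mmu (Fb x))"
    by (intro exI[of _ F] exI[of _ id]) simp
qed

lemma K_real:
  fixes \<omega> :: "'v::euclidean_space \<Rightarrow> 'v \<Rightarrow> real"
  assumes T: "tsg \<omega>"
    and N: "\<And>a. (\<forall>b. \<omega> a b = 0) \<Longrightarrow> a = 0"
    and x: "x \<noteq> 0" and ker: "\<forall>y. \<omega> x y = 0 \<longrightarrow> \<omega> u y = 0"
  shows "\<exists>c. u = c *\<^sub>R x"
proof -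
  interpret tsg \<omega> by (rule T)
  have "\<not> (\<forall>b. \<omega> x b = 0)" using N[of x] x by auto
  then obtain y0 where y0: "\<omega> x y0 \<noteq> 0" by blast
  define c where "c = \<omega> u y0 / \<omega> x y0"
  have "\<omega> (u - c *\<^sub>R x) y = 0" for y
  proof -
    define y' where "y' = y - (\<omega> x y / \<omega> x y0) *\<^sub>R y0"
    have "\<omega> x y' = 0" using y0 by (simp add: y'_def wdiff2 wscal2)
    then have "\<omega> u y' = 0" using ker by blast
    then have "\<omega> u y = (\<omega> x y / \<omega> x y0) * \<omega> u y0" by (simp add: y'_def wdiff2 wscal2)
    then show ?thesis by (simp add: wdiff wscal c_def)
  qed
  then have "u - c *\<^sub>R x = 0" using N by blast
  then show ?thesis by auto
qed

lemma heis_tsg: "tsg (heis_form :: ((real^'m) \<times> (real^'m)) \<Rightarrow> _ \<Rightarrow> real)"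
  by unfold_locales (auto simp: heis_form_def inner_add_left inner_add_right algebra_simps inner_commute split: prod.splits)

lemma heis_decomp: "aut_central_lie_decomp (heisenberg_group :: (((real^'m) \<times> (real^'m)) \<times> real) monoid)"
proof -
  interpret tsg "heis_form :: ((real^'m) \<times> (real^'m)) \<Rightarrow> _ \<Rightarrow> real" by (rule heis_tsg)
  have N: "a = 0" if "\<forall>b. heis_form a b = (0::real)" for a :: "(real^'m) \<times> (real^'m)"
  proof -
    obtain x y where a: "a = (x, y)" by force
    have "heis_form a (0, x) = 0" "heis_form a (y, 0) = 0" using that by auto
    then have "x \<bullet> x = 0" "y \<bullet> y = 0" by (auto simp: a heis_form_def)
    then show ?thesis using a by (simp add: zero_prod_def)
  qed
  have S: "\<exists>a b :: (real^'m) \<times> (real^'m). heis_form a b = z" for z :: real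
  proof -
    obtain e :: "real^'m" where e: "e \<in> Basis" using SOME_Basis by blast
    have "heis_form (z *\<^sub>R e, 0) (0, e) = z" using e by (simp add: heis_form_def)
    then show ?thesis by blast
  qed
  show ?thesis unfolding heisenberg_group_def
    by (rule decomp[OF N K_real[OF heis_tsg N] S]) auto
qed



definition qone :: "real^4" where "qone = (\<chi> l. if l = 1 then 1 else 0)"
definition qi :: "real^4" where "qi = (\<chi> l. if l = 2 then 1 else 0)"

lemmas qsimps = qmult_def qconj_def qim_def qone_def qi_def vec_eq_iff forall_4 forall_3

lemma qmult_add_left: "qmult (a + b) c = qmult a c + qmult b c"
  by (simp add: qsimps algebra_simps)
lemma qmult_add_right: "qmult c (a + b) = qmult c a + qmult c b"
  by (simp add: qsimps algebra_simps)
lemma qmult_scale_left: "qmult (r *\<^sub>R a) c = r *\<^sub>R qmult a c"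
  by (simp add: qsimps algebra_simps)
lemma qmult_scale_right: "qmult c (r *\<^sub>R a) = r *\<^sub>R qmult c a"
  by (simp add: qsimps algebra_simps)
lemma qmult_assoc: "qmult (qmult a b) c = qmult a (qmult b c)"
  by (simp add: qsimps algebra_simps)
lemma qconj_qmult: "qconj (qmult a b) = qmult (qconj b) (qconj a)"
  by (simp add: qsimps algebra_simps)
lemma qconj_qconj[simp]: "qconj (qconj a) = a"
  by (simp add: qsimps)
lemma qim_qconj: "qim (qconj a) = - qim a"
  by (simp add: qsimps)
lemma qnorm: "qmult (qconj p) p = (p \<bullet> p) *\<^sub>R qone"
  by (simp add: qsimps inner_vec_def sum_4 power2_eq_square algebra_simps)
lemma qim_real: "qim p = 0 \<Longrightarrow> p = (p$1) *\<^sub>R qone"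
  by (simp add: qsimps)
lemma qmult_qone: "qmult qone q = q"
  by (simp add: qsimps)
lemma qim_qone: "qim qone = 0"
  by (simp add: qsimps)
lemma qim_zero_i: "qim q = 0 \<Longrightarrow> qim (qmult q qi) = 0 \<Longrightarrow> q = 0"
  by (simp add: qsimps)
lemma qim_qi: "qim qi \<noteq> 0"
  by (simp add: qsimps)

lemma lin_qconj: "linear qconj"
  by (rule linearI) (simp_all add: qsimps)
lemma lin_qim: "linear qim"
  by (rule linearI) (simp_all add: qsimps)
lemma lin_qmult_left: "linear (\<lambda>p. qmult p q)"
  by (rule linearI) (simp_all add: qmult_add_left qmult_scale_left)
lemma lin_qmult_right: "linear (\<lambda>p. qmult q p)"
  by (rule linearI) (simp_all add: qmult_add_right qmult_scale_right)

definition hp :: "real^4^'k \<Rightarrow> real^4^'k \<Rightarrow> real^4" where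
  "hp v w = (\<Sum>i\<in>UNIV. qmult (qconj (v$i)) (w$i))"
definition rmul :: "real^4^'k \<Rightarrow> real^4 \<Rightarrow> real^4^'k" where
  "rmul w q = (\<chi> i. qmult (w$i) q)"

lemma qheis_hp: "qheis_form v w = qim (hp v w)"
  by (simp add: qheis_form_def hp_def)

lemma hp_add_left: "hp (a + b) c = hp a c + hp b c"
  by (simp add: hp_def linear_add[OF lin_qconj] qmult_add_left sum.distrib)
lemma hp_add_right: "hp c (a + b) = hp c a + hp c b"
  by (simp add: hp_def qmult_add_right sum.distrib)
lemma hp_scale_left: "hp (r *\<^sub>R a) c = r *\<^sub>R hp a c"
  by (simp add: hp_def linear_scale[OF lin_qconj] qmult_scale_left scaleR_sum_right)
lemma hp_scale_right: "hp c (r *\<^sub>R a) = r *\<^sub>R hp c a"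
  by (simp add: hp_def qmult_scale_right scaleR_sum_right)
lemma hp_diff_right: "hp c (a - b) = hp c a - hp c b"
  using hp_add_right[of c "a - b" b] by simp
lemma hp_diff_left: "hp (a - b) c = hp a c - hp b c"
  using hp_add_left[of "a - b" b c] by simp
lemma hp_swap: "hp a b = qconj (hp b a)"
  by (simp add: hp_def linear_sum[OF lin_qconj] qconj_qmult)
lemma hp_rmul: "hp v (rmul w q) = qmult (hp v w) q"
  by (simp add: hp_def rmul_def qmult_assoc linear_sum[OF lin_qmult_left])
lemma hp_self: "hp x x = (x \<bullet> x) *\<^sub>R qone"
  by (simp add: hp_def qnorm inner_vec_def scaleR_sum_left)
lemma hp_zero_right[simp]: "hp v 0 = 0"
  using hp_scale_right[of v 0 0] by simp

lemma qheis_tsg: "tsg (qheis_form :: real^4^'k \<Rightarrow> _ \<Rightarrow> real^3)"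
proof
  fix a b c :: "real^4^'k" and r :: real
  show "qheis_form (a + b) c = qheis_form a c + qheis_form b c"
    by (simp add: qheis_hp hp_add_left linear_add[OF lin_qim])
  show "qheis_form (r *\<^sub>R a) c = r *\<^sub>R qheis_form a c"
    by (simp add: qheis_hp hp_scale_left linear_scale[OF lin_qim])
  show "qheis_form a b = - qheis_form b a"
    by (metis qheis_hp hp_swap qim_qconj)
qed

lemma qheis_N:
  fixes a :: "real^4^'k"
  assumes "\<forall>b. qheis_form a b = 0" shows "a = 0"
proof (rule ccontr)
  assume a: "a \<noteq> 0"
  have "qheis_form a (rmul a qi) = (a \<bullet> a) *\<^sub>R qim qi"
    by (simp add: qheis_hp hp_rmul hp_self qmult_scale_left qmult_qone linear_scale[OF lin_qim])
  moreover have "a \<bullet> a \<noteq> 0" using a by simp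
  ultimately show False using assms qim_qi by simp
qed

lemma qheis_K:
  fixes x u :: "real^4^'k"
  assumes x: "x \<noteq> 0" and ker: "\<forall>y. qheis_form x y = 0 \<longrightarrow> qheis_form u y = 0"
  shows "\<exists>c. u = c *\<^sub>R x"
proof -
  interpret tsg "qheis_form :: real^4^'k \<Rightarrow> _ \<Rightarrow> real^3" by (rule qheis_tsg)
  have xx: "x \<bullet> x \<noteq> 0" using x by simp
  have "qheis_form u x = 0" using ker wself by blast
  then have "qim (hp u x) = 0" by (simp add: qheis_hp)
  then have ux: "hp u x = (hp u x $ 1) *\<^sub>R qone" by (rule qim_real)
  define s where "s = hp u x $ 1"
  define c where "c = s / (x \<bullet> x)"
  have "hp (u - c *\<^sub>R x) w = 0" for w
  proof -
    define q where "q = (1 / (x \<bullet> x)) *\<^sub>R hp x w"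
    define y where "y = w - rmul x q"
    have hxy: "hp x y = 0"
      using xx by (simp add: y_def q_def hp_diff_right hp_rmul hp_self qmult_scale_left qmult_scale_right qmult_qone)
    have "qheis_form x y = 0" using hxy by (simp add: qheis_hp linear_0[OF lin_qim])
    then have 1: "qim (hp u y) = 0" using ker by (simp add: qheis_hp)
    have "qheis_form x (rmul y qi) = 0"
      using hxy by (simp add: qheis_hp hp_rmul linear_0[OF lin_qim] qsimps)
    then have "qheis_form u (rmul y qi) = 0" using ker by blast
    then have 2: "qim (qmult (hp u y) qi) = 0" by (simp add: qheis_hp hp_rmul)
    have "hp u y = 0" using qim_zero_i[OF 1 2] .
    then have "hp u w = qmult (hp u x) q" by (simp add: y_def hp_diff_right hp_rmul)
    also have "\<dots> = c *\<^sub>R hp x w"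
      by (subst ux) (simp add: q_def c_def s_def qmult_scale_left qmult_scale_right qmult_qone)
    finally show ?thesis by (simp add: hp_diff_left hp_scale_left)
  qed
  then have "hp (u - c *\<^sub>R x) (u - c *\<^sub>R x) = 0" by blast
  then have "((u - c *\<^sub>R x) \<bullet> (u - c *\<^sub>R x)) *\<^sub>R qone = 0" by (simp add: hp_self)
  moreover have "qone \<noteq> 0" by (simp add: qsimps)
  ultimately have "(u - c *\<^sub>R x) \<bullet> (u - c *\<^sub>R x) = 0" by simp
  then have "u = c *\<^sub>R x" by simp
  then show ?thesis by blast
qed

lemma qheis_S: "\<exists>a b :: real^4^'k. qheis_form a b = z"
proof -
  obtain i0 :: 'k where True by blast
  define a :: "real^4^'k" where "a = (\<chi> i. if i = i0 then qone else 0)"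
  define q :: "real^4" where "q = (\<chi> l. if l = 1 then 0 else if l = 2 then z$1 else if l = 3 then z$2 else z$3)"
  define b :: "real^4^'k" where "b = (\<chi> i. if i = i0 then q else 0)"
  have t: "qmult (qconj (a$i)) (b$i) = (if i = i0 then q else 0)" for i
    by (cases "i = i0") (simp_all add: a_def b_def qsimps)
  have hq: "hp a b = q" unfolding hp_def t by simp
  have "qim q = z" unfolding qim_def q_def vec_eq_iff forall_3 by simp
  then have "qheis_form a b = z" using hq qheis_hp by metis
  then show ?thesis by blast
qed



lemmas osimps = oheis_form_def omult_def oconj_def oim_def qsimps

lemma oheis_tsg: "tsg oheis_form"
proof
  fix a b c :: "(real^4) \<times> (real^4)" and r :: real
  obtain a1 a2 b1 b2 c1 c2 where p: "a = (a1, a2)" "b = (b1, b2)" "c = (c1, c2)" by force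
  show "oheis_form (a + b) c = oheis_form a c + oheis_form b c"
    by (simp add: p osimps algebra_simps)
  show "oheis_form (r *\<^sub>R a) c = r *\<^sub>R oheis_form a c"
    by (simp add: p osimps algebra_simps)
  show "oheis_form a b = - oheis_form b a"
    by (simp add: p osimps algebra_simps)
qed

lemma oheis_N:
  assumes "\<forall>b. oheis_form a b = 0" shows "a = 0"
proof -
  obtain a1 a2 where p: "a = (a1, a2)" by force
  have "oheis_form a (qone, 0) = 0" "oheis_form a (qi, 0) = 0" using assms by auto
  then show ?thesis by (simp add: p osimps zero_prod_def)
qed

lemma oid: "omult (omult a b) (oconj b) = (b \<bullet> b) *\<^sub>R a"
proof -
  obtain a1 a2 b1 b2 where p: "a = (a1, a2)" "b = (b1, b2)" by force
  show ?thesis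
    by (simp add: p osimps inner_vec_def sum_4 algebra_simps power2_eq_square)
qed

lemma oim_real: "oim p = 0 \<Longrightarrow> p = ((fst p $ 1) *\<^sub>R qone, 0)"
  by (cases p) (simp add: osimps zero_prod_def)

lemma omult_real: "omult ((s *\<^sub>R qone, 0)) y = s *\<^sub>R y"
  by (cases y) (simp add: osimps)

lemma oconj_scale: "oconj (s *\<^sub>R y) = s *\<^sub>R oconj y"
  by (cases y) (simp add: osimps)

lemma oconj_oconj: "oconj (oconj y) = y"
  by (cases y) (simp add: osimps)

lemma oheis_K:
  assumes x: "x \<noteq> 0" and ker: "\<forall>y. oheis_form x y = 0 \<longrightarrow> oheis_form u y = 0"
  shows "\<exists>c. u = c *\<^sub>R x"
proof -
  interpret tsg oheis_form by (rule oheis_tsg)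
  have "oheis_form u x = 0" using ker wself by blast
  then have "oim (omult (oconj u) x) = 0" by (simp add: oheis_form_def)
  then have P: "omult (oconj u) x = (s *\<^sub>R qone, 0)"
    if "s = fst (omult (oconj u) x) $ 1" for s using oim_real that by metis
  define s where "s = fst (omult (oconj u) x) $ 1"
  have "(x \<bullet> x) *\<^sub>R oconj u = omult (omult (oconj u) x) (oconj x)" by (simp add: oid)
  also have "\<dots> = s *\<^sub>R oconj x" using P[OF s_def] by (simp add: omult_real)
  finally have "oconj ((x \<bullet> x) *\<^sub>R oconj u) = oconj (s *\<^sub>R oconj x)" by simp
  then have "(x \<bullet> x) *\<^sub>R u = s *\<^sub>R x" by (simp add: oconj_scale oconj_oconj)
  then have eq: "(x \<bullet> x) *\<^sub>R u = s *\<^sub>R x" .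
  have xx: "x \<bullet> x \<noteq> 0" using x by simp
  have "u = (1 / (x \<bullet> x)) *\<^sub>R ((x \<bullet> x) *\<^sub>R u)" using xx by simp
  also have "\<dots> = (s / (x \<bullet> x)) *\<^sub>R x" using eq by simp
  finally have "u = (s / (x \<bullet> x)) *\<^sub>R x" .
  then show ?thesis by blast
qed

lemma oheis_S: "\<exists>a b. oheis_form a b = z"
proof -
  obtain z3 z4 where z: "z = (z3, z4)" by force
  define q :: "real^4" where "q = (\<chi> l. if l = 1 then 0 else if l = 2 then z3$1 else if l = 3 then z3$2 else z3$3)"
  have "qim q = z3" unfolding qim_def q_def vec_eq_iff forall_3 by simp
  moreover have "oheis_form (qone, 0) (q, z4) = (qim q, z4)"
    unfolding oheis_form_def omult_def oconj_def oim_def by (simp add: qsimps)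
  ultimately show ?thesis using z by metis
qed


lemma qheis_decomp: "aut_central_lie_decomp (quaternionic_heisenberg_group :: ((real^4^'k) \<times> (real^3)) monoid)"
  unfolding quaternionic_heisenberg_group_def
  by (rule tsg.decomp[OF qheis_tsg qheis_N qheis_K qheis_S]) auto

lemma oheis_decomp: "aut_central_lie_decomp octonionic_heisenberg_group"
  unfolding octonionic_heisenberg_group_def
  by (rule tsg.decomp[OF oheis_tsg oheis_N oheis_K oheis_S]) auto

theorem theoremC:
  shows "aut_central_lie_decomp (vec_group :: (real^'n) monoid)
       \<and> aut_central_lie_decomp (heisenberg_group :: (((real^'m) \<times> (real^'m)) \<times> real) monoid)
       \<and> aut_central_lie_decomp (quaternionic_heisenberg_group :: ((real^4^'k) \<times> (real^3)) monoid)
       \<and> aut_central_lie_decomp octonionic_heisenberg_group"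
  using vec_decomp heis_decomp qheis_decomp oheis_decomp by blast

end
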